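(* Let $M=(E,\mathcal{I})$ be a matroid and consider the matroid game with a diagonal loss matrix $L$ with $L_{e,e}>0$ for all $e\in E$. If this game has a symmetric Nash equilibrium $(x,x)$, then $x$ is the unique lexicographically optimal point of $B(M)$ with respect to the weight vector $w(e)=1/L_{e,e}$ ($e\in E$).
   Context: $B(M)=\{x\ge0: x(S)\le r(S)\ \forall S\subseteq E,\ x(E)=r(E)\}$ with $r$ the rank function. In the matroid game, the row player chooses $x\in B(M)$ minimizing $x^TLy$ and the column player chooses $y\in B(M)$ maximizing it; $(x,x)$ is a symmetric Nash equilibrium if $x^TLz\le x^TLx\le z^TLx$ for all $z\in B(M)$. For a positive weight vector $w$, $x\in B(M)$ is lexicographically optimal if the $|E|$-tuple $(x(e)/w(e))_{e\in E}$ sorted in increasing order is lexicographically maximum among all such sorted tuples $(y(e)/w(e))_{e\in E}$ for $y\in B(M)$. *)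

theory Defs
  imports Complex_Main "HOL-Library.Multiset"
begin

definition matroid :: "'a set \<Rightarrow> 'a set set \<Rightarrow> bool" where
  "matroid E I \<longleftrightarrow> finite E \<and> (\<forall>X\<in>I. X \<subseteq> E) \<and> {} \<in> I
     \<and> (\<forall>X Y. X \<in> I \<and> Y \<subseteq> X \<longrightarrow> Y \<in> I)
     \<and> (\<forall>X Y. X \<in> I \<and> Y \<in> I \<and> card X < card Y \<longrightarrow> (\<exists>e\<in>Y - X. insert e X \<in> I))"

definition rank :: "'a set set \<Rightarrow> 'a set \<Rightarrow> nat" where
  "rank I S = Max {card X | X. X \<subseteq> S \<and> X \<in> I}"

definition base_polytope :: "'a set \<Rightarrow> 'a set set \<Rightarrow> ('a \<Rightarrow> real) set" where
  "base_polytope E I = {x. (\<forall>e\<in>E. x e \<ge> 0) \<and> (\<forall>e. e \<notin> E \<longrightarrow> x e = 0)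
      \<and> (\<forall>S\<subseteq>E. (\<Sum>e\<in>S. x e) \<le> real (rank I S))
      \<and> (\<Sum>e\<in>E. x e) = real (rank I E)}"

definition bilin :: "'a set \<Rightarrow> ('a \<Rightarrow> real) \<Rightarrow> ('a \<Rightarrow> 'a \<Rightarrow> real) \<Rightarrow> ('a \<Rightarrow> real) \<Rightarrow> real" where
  "bilin E x L y = (\<Sum>e\<in>E. \<Sum>f\<in>E. x e * L e f * y f)"

definition symmetric_NE :: "'a set \<Rightarrow> 'a set set \<Rightarrow> ('a \<Rightarrow> 'a \<Rightarrow> real) \<Rightarrow> ('a \<Rightarrow> real) \<Rightarrow> bool" where
  "symmetric_NE E I L x \<longleftrightarrow> x \<in> base_polytope E I \<and>
     (\<forall>z\<in>base_polytope E I. bilin E x L z \<le> bilin E x L x \<and> bilin E x L x \<le> bilin E z L x)"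

definition sorted_ratios :: "'a set \<Rightarrow> ('a \<Rightarrow> real) \<Rightarrow> ('a \<Rightarrow> real) \<Rightarrow> real list" where
  "sorted_ratios E w x = sorted_list_of_multiset (image_mset (\<lambda>e. x e / w e) (mset_set E))"

definition lex_le :: "real list \<Rightarrow> real list \<Rightarrow> bool" where
  "lex_le xs ys \<longleftrightarrow> xs = ys \<or>
     (\<exists>i < min (length xs) (length ys). take i xs = take i ys \<and> xs ! i < ys ! i)"

definition lex_optimal :: "'a set \<Rightarrow> 'a set set \<Rightarrow> ('a \<Rightarrow> real) \<Rightarrow> ('a \<Rightarrow> real) \<Rightarrow> bool" where
  "lex_optimal E I w x \<longleftrightarrow> x \<in> base_polytope E I \<and>
     (\<forall>y\<in>base_polytope E I. lex_le (sorted_ratios E w y) (sorted_ratios E w x))"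

end

theory Submission
  imports Defs
begin


lemma count_img_mset_set:
  assumes "finite E"
  shows "count (image_mset f (mset_set E)) z = card {e\<in>E. f e = z}"
proof -
  have "count (image_mset f (mset_set E)) z = (\<Sum>x | x \<in># mset_set E \<and> z = f x. count (mset_set E) x)"
    by (rule count_image_mset')
  also have "\<dots> = (\<Sum>x \<in> {e\<in>E. f e = z}. 1)"
    using assms by (intro sum.cong) (auto simp: count_mset_set')
  finally show ?thesis by simp
qed

lemma sl_append:
  fixes C D :: "real multiset"
  assumes "\<forall>c\<in>#C. \<forall>z\<in>#D. c \<le> z"
  shows "sorted_list_of_multiset (C + D) = sorted_list_of_multiset C @ sorted_list_of_multiset D"
proof -
  let ?l = "sorted_list_of_multiset C @ sorted_list_of_multiset D"
  have "sorted ?l" using assms by (simp add: sorted_append)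
  moreover have "mset ?l = C + D" by simp
  ultimately show ?thesis by (metis sorted_list_of_multiset_mset sorted_sort_id)
qed

lemma lex_core:
  fixes A B :: "real multiset"
  assumes sz: "size A = size B" and lt: "\<forall>w<v. count A w = count B w" and cv: "count A v < count B v"
  shows "\<exists>i<length (sorted_list_of_multiset B). take i (sorted_list_of_multiset B) = take i (sorted_list_of_multiset A) \<and> sorted_list_of_multiset B ! i < sorted_list_of_multiset A ! i"
proof -
  define C where "C = filter_mset (\<lambda>z. z < v) A + replicate_mset (count A v) v"
  define A2 where "A2 = filter_mset (\<lambda>z. z > v) A"
  define B2 where "B2 = filter_mset (\<lambda>z. z > v) B + replicate_mset (count B v - count A v) v"
  have A: "A = C + A2" unfolding C_def A2_def
    by (rule multiset_eqI) (auto simp: count_replicate_mset)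
  have B: "B = C + B2" unfolding C_def B2_def
  proof (rule multiset_eqI)
    fix z show "count B z = count (filter_mset (\<lambda>z. z < v) A + replicate_mset (count A v) v +
          (filter_mset (\<lambda>z. v < z) B + replicate_mset (count B v - count A v) v)) z"
      using lt cv by (cases "z < v"; cases "z = v") (auto simp: count_replicate_mset)
  qed
  have vB2: "v \<in># B2" using cv unfolding B2_def by (auto simp: count_replicate_mset)
  have Cle: "\<forall>c\<in>#C. c \<le> v" unfolding C_def by auto
  have A2g: "\<forall>z\<in>#A2. z > v" unfolding A2_def by auto
  have B2g: "\<forall>z\<in>#B2. z \<ge> v" unfolding B2_def by auto
  have "size B2 > 0" using vB2 by (cases B2) auto
  hence "size A2 > 0" using sz A B by simp
  hence "A2 \<noteq> {#}" by auto
  have a: "sorted_list_of_multiset A = sorted_list_of_multiset C @ sorted_list_of_multiset A2"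
    using A Cle A2g by (metis sl_append order.trans less_imp_le)
  have b: "sorted_list_of_multiset B = sorted_list_of_multiset C @ sorted_list_of_multiset B2"
    using B Cle B2g by (metis sl_append order.trans)
  define i where "i = length (sorted_list_of_multiset C)"
  let ?lb = "sorted_list_of_multiset B2" and ?la = "sorted_list_of_multiset A2"
  have "v \<in> set ?lb" using vB2 by simp
  then obtain j where j: "j < length ?lb" "?lb ! j = v" by (metis in_set_conv_nth)
  have lb0: "?lb ! 0 \<le> v" using j sorted_nth_mono[OF sorted_sorted_list_of_multiset, of 0 j B2] by simp
  have "?la \<noteq> []" using \<open>A2 \<noteq> {#}\<close> by (metis mset_sorted_list_of_multiset mset.simps(1))
  hence "?la ! 0 \<in> set ?la" by (simp add: nth_mem del: set_sorted_list_of_multiset)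
  hence la0: "?la ! 0 > v" using A2g by simp
  show ?thesis
  proof (intro exI conjI)
    show "i < length (sorted_list_of_multiset B)" using b j unfolding i_def by auto
    show "take i (sorted_list_of_multiset B) = take i (sorted_list_of_multiset A)"
      using a b unfolding i_def by simp
    show "sorted_list_of_multiset B ! i < sorted_list_of_multiset A ! i"
      using a b lb0 la0 unfolding i_def by (simp add: nth_append)
  qed
qed




lemma abel:
  fixes u d :: "'a \<Rightarrow> real"
  assumes "finite E" "E \<noteq> {}" "\<forall>t\<in>u`E. (\<Sum>e\<in>{e\<in>E. u e \<le> t}. d e) \<le> 0"
  shows "(\<Sum>e\<in>E. (u e - Max (u`E)) * d e) \<ge> 0 \<and>
    ((\<Sum>e\<in>E. (u e - Max (u`E)) * d e) = 0 \<longrightarrow>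
      (\<forall>t\<in>u`E. t < Max (u`E) \<longrightarrow> (\<Sum>e\<in>{e\<in>E. u e \<le> t}. d e) = 0))"
  using assms
proof (induction "card E" arbitrary: E rule: less_induct)
  case less
  define m where "m = Max (u`E)"
  have mge: "\<forall>e\<in>E. u e \<le> m" unfolding m_def using less.prems by auto
  define E' where "E' = {e\<in>E. u e < m}"
  have split: "(\<Sum>e\<in>E. (u e - m) * d e) = (\<Sum>e\<in>E'. (u e - m) * d e)"
    unfolding E'_def using less.prems mge
    by (intro sum.mono_neutral_right) (auto simp: less_le)
  show ?case
  proof (cases "E' = {}")
    case True
    have "\<forall>t\<in>u`E. \<not> t < m" using True unfolding E'_def by auto
    then show ?thesis using split True unfolding m_def[symmetric] by simp
  next
    case False
    define m' where "m' = Max (u`E')"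
    have fE': "finite E'" using less.prems unfolding E'_def by auto
    have m'in: "m' \<in> u`E'" unfolding m'_def using fE' False by auto
    have m'lt: "m' < m" using m'in unfolding E'_def by auto
    have m'ge: "\<forall>e\<in>E'. u e \<le> m'" unfolding m'_def using fE' by auto
    have subs: "\<And>t. t < m \<Longrightarrow> {e\<in>E'. u e \<le> t} = {e\<in>E. u e \<le> t}" unfolding E'_def by auto
    have E'eq: "{e\<in>E. u e \<le> m'} = E'" using m'lt m'ge unfolding E'_def by auto
    have cardlt: "card E' < card E"
    proof -
      obtain e where "e \<in> E" "u e = m" using less.prems unfolding m_def
        by (metis (mono_tags, lifting) Max_in finite_imageI image_iff image_is_empty)
      hence "E' \<subset> E" unfolding E'_def by auto
      thus ?thesis using less.prems by (simp add: psubset_card_mono)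
    qed
    have hyp': "\<forall>t\<in>u`E'. (\<Sum>e\<in>{e\<in>E'. u e \<le> t}. d e) \<le> 0"
    proof
      fix t assume "t \<in> u`E'"
      hence "t < m" "t \<in> u`E" unfolding E'_def by auto
      thus "(\<Sum>e\<in>{e\<in>E'. u e \<le> t}. d e) \<le> 0" using subs less.prems(3) by (metis (no_types, lifting))
    qed
    have IH: "(\<Sum>e\<in>E'. (u e - m') * d e) \<ge> 0 \<and>
      ((\<Sum>e\<in>E'. (u e - m') * d e) = 0 \<longrightarrow>
      (\<forall>t\<in>u`E'. t < m' \<longrightarrow> (\<Sum>e\<in>{e\<in>E'. u e \<le> t}. d e) = 0))"
      using less.hyps[OF cardlt fE' False hyp'] unfolding m'_def by simp
    have dE': "(\<Sum>e\<in>E'. d e) \<le> 0"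
      using less.prems(3) m'in E'eq unfolding E'_def by force
    have decomp: "(\<Sum>e\<in>E'. (u e - m) * d e) = (\<Sum>e\<in>E'. (u e - m') * d e) + (m' - m) * (\<Sum>e\<in>E'. d e)"
      by (simp add: algebra_simps sum.distrib sum_distrib_left sum_subtractf)
    have t2: "(m' - m) * (\<Sum>e\<in>E'. d e) \<ge> 0" using m'lt dE' by (simp add: mult_nonpos_nonpos)
    have ge: "(\<Sum>e\<in>E. (u e - m) * d e) \<ge> 0" using split decomp t2 IH by linarith
    moreover have "(\<Sum>e\<in>E. (u e - m) * d e) = 0 \<longrightarrow>
      (\<forall>t\<in>u`E. t < m \<longrightarrow> (\<Sum>e\<in>{e\<in>E. u e \<le> t}. d e) = 0)"
    proof (intro impI ballI)
      fix t assume z: "(\<Sum>e\<in>E. (u e - m) * d e) = 0" and t: "t \<in> u`E" "t < m"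
      have z1: "(\<Sum>e\<in>E'. (u e - m') * d e) = 0" and z2: "(m' - m) * (\<Sum>e\<in>E'. d e) = 0"
        using z split decomp t2 IH by linarith+
      have "t \<in> u`E'" using t unfolding E'_def by auto
      hence "t \<le> m'" using m'ge by auto
      show "(\<Sum>e\<in>{e\<in>E. u e \<le> t}. d e) = 0"
      proof (cases "t = m'")
        case True
        then show ?thesis using E'eq z2 m'lt by simp
      next
        case False
        hence "t < m'" using \<open>t \<le> m'\<close> by simp
        then have "(\<Sum>e\<in>{e\<in>E'. u e \<le> t}. d e) = 0" using IH z1 \<open>t \<in> u`E'\<close> by blast
        then show ?thesis using subs[OF \<open>t < m\<close>] by simp
      qed
    qed
    ultimately show ?thesis unfolding m_def by simp
  qed
qed




lemma mat_fin: "matroid E I \<Longrightarrow> X \<in> I \<Longrightarrow> finite X"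
  unfolding matroid_def by (meson finite_subset)

lemma mat_sub: "matroid E I \<Longrightarrow> X \<in> I \<Longrightarrow> X \<subseteq> E"
  unfolding matroid_def by blast

lemma mat_aug: "matroid E I \<Longrightarrow> X \<in> I \<Longrightarrow> Y \<in> I \<Longrightarrow> card X < card Y \<Longrightarrow> \<exists>e\<in>Y - X. insert e X \<in> I"
  unfolding matroid_def by blast

lemma mat_down: "matroid E I \<Longrightarrow> X \<in> I \<Longrightarrow> Y \<subseteq> X \<Longrightarrow> Y \<in> I"
  unfolding matroid_def by blast

lemma rank_fin:
  assumes "matroid E I" "S \<subseteq> E"
  shows "finite {card X | X. X \<subseteq> S \<and> X \<in> I}" "{card X | X. X \<subseteq> S \<and> X \<in> I} \<noteq> {}"
proof -
  have "finite S" using assms unfolding matroid_def by (meson finite_subset)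
  hence "finite (card ` Pow S)" by simp
  moreover have "{card X | X. X \<subseteq> S \<and> X \<in> I} \<subseteq> card ` Pow S" by auto
  ultimately show "finite {card X | X. X \<subseteq> S \<and> X \<in> I}" by (rule finite_subset[rotated])
  have "{} \<in> I" using assms unfolding matroid_def by blast
  thus "{card X | X. X \<subseteq> S \<and> X \<in> I} \<noteq> {}" by blast
qed

lemma rank_ex:
  assumes "matroid E I" "S \<subseteq> E"
  shows "\<exists>X. X \<subseteq> S \<and> X \<in> I \<and> card X = rank I S"
proof -
  have "rank I S \<in> {card X | X. X \<subseteq> S \<and> X \<in> I}"
    unfolding rank_def using rank_fin[OF assms] by (rule Max_in)
  thus ?thesis by auto
qed

lemma rank_ge:
  assumes "matroid E I" "S \<subseteq> E" "X \<subseteq> S" "X \<in> I"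
  shows "card X \<le> rank I S"
  unfolding rank_def using rank_fin[OF assms(1,2)] assms(3,4) by (intro Max_ge) auto

lemma aug:
  assumes m: "matroid E I"
  shows "X \<in> I \<Longrightarrow> Y \<in> I \<Longrightarrow> card X \<le> card Y \<Longrightarrow> \<exists>Z. Z \<in> I \<and> X \<subseteq> Z \<and> Z \<subseteq> X \<union> Y \<and> card Z = card Y"
proof (induction "card Y - card X" arbitrary: X)
  case 0
  then show ?case by (intro exI[of _ X]) auto
next
  case (Suc n)
  hence lt: "card X < card Y" by simp
  then obtain e where e: "e \<in> Y - X" "insert e X \<in> I"
    using mat_aug[OF m Suc.prems(1,2) lt] by blast
  have fX: "finite X" using mat_fin[OF m Suc.prems(1)] .
  have c: "card (insert e X) = card X + 1" using e fX by simp
  obtain Z where Z: "Z \<in> I" "insert e X \<subseteq> Z" "Z \<subseteq> insert e X \<union> Y" "card Z = card Y"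
  proof -
    have n: "n = card Y - card (insert e X)" using Suc.hyps(2) c by simp
    have "card (insert e X) \<le> card Y" using c lt by simp
    from Suc.hyps(1)[OF n e(2) Suc.prems(2) this] show ?thesis using that by blast
  qed
  show ?case using Z e by (intro exI[of _ Z]) auto
qed

lemma chain_basis:
  fixes u :: "'a \<Rightarrow> real"
  assumes m: "matroid E I"
  shows "\<exists>B. B \<subseteq> E \<and> B \<in> I \<and> card B = rank I E \<and>
     (\<forall>t\<in>u`E. card (B \<inter> {e\<in>E. u e \<le> t}) = rank I {e\<in>E. u e \<le> t})"
proof -
  have fE: "finite E" using m unfolding matroid_def by blast
  define bases where "bases = {B. B \<subseteq> E \<and> B \<in> I \<and> card B = rank I E}"
  define S where "S t = {e\<in>E. u e \<le> t}" for t
  define \<phi> where "\<phi> B = (\<Sum>t\<in>u`E. card (B \<inter> S t))" for B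
  have "bases \<subseteq> Pow E" unfolding bases_def by auto
  have fb: "finite bases" using finite_subset[OF \<open>bases \<subseteq> Pow E\<close>] fE by simp
  obtain X0 where X0: "X0 \<subseteq> E" "X0 \<in> I" "card X0 = rank I E" using rank_ex[OF m order_refl] by blast
  have nb: "bases \<noteq> {}" unfolding bases_def using X0 by auto
  have "Max (\<phi> ` bases) \<in> \<phi> ` bases" using fb nb by simp
  then obtain B0 where B0: "B0 \<in> bases" "\<phi> B0 = Max (\<phi> ` bases)" by auto
  have maxB: "\<phi> B \<le> \<phi> B0" if "B \<in> bases" for B unfolding B0(2) using fb that by (intro Max_ge) auto
  have B0E: "B0 \<subseteq> E" "B0 \<in> I" "card B0 = rank I E" using B0(1) unfolding bases_def by auto
  have fB0: "finite B0" by (rule finite_subset[OF B0E(1) fE])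
  have SE: "S t \<subseteq> E" for t unfolding S_def by auto
  have "card (B0 \<inter> S t) = rank I (S t)" if t: "t \<in> u`E" for t
  proof (rule ccontr)
    assume ne: "card (B0 \<inter> S t) \<noteq> rank I (S t)"
    have "B0 \<inter> S t \<in> I" using mat_down[OF m B0E(2)] by blast
    hence "card (B0 \<inter> S t) \<le> rank I (S t)" using rank_ge[OF m SE] by blast
    hence lt: "card (B0 \<inter> S t) < rank I (S t)" using ne by simp
    obtain X where X: "X \<subseteq> S t" "X \<in> I" "card X = rank I (S t)" using rank_ex[OF m SE] by blast
    obtain f where f: "f \<in> X - (B0 \<inter> S t)" "insert f (B0 \<inter> S t) \<in> I"
      using mat_aug[OF m \<open>B0 \<inter> S t \<in> I\<close> X(2)] X(3) lt by auto
    have fS: "f \<in> S t" using f X by auto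
    have fnB: "f \<notin> B0" using f fS by auto
    have XE: "X \<subseteq> E" using X SE by blast
    have rSE: "rank I (S t) \<le> rank I E" using rank_ge[OF m order_refl XE X(2)] X(3) by simp
    have "\<not> B0 \<subseteq> S t"
    proof
      assume "B0 \<subseteq> S t" hence "B0 \<inter> S t = B0" by auto
      thus False using lt rSE B0E by simp
    qed
    then obtain g where g: "g \<in> B0" "g \<notin> S t" by auto
    have "B0 \<inter> S t \<subset> B0" using g by auto
    hence "card (B0 \<inter> S t) < card B0" using fB0 by (simp add: psubset_card_mono)
    hence cJ: "card (insert f (B0 \<inter> S t)) \<le> card B0" using fB0 fnB by simp
    obtain Z where Z: "Z \<in> I" "insert f (B0 \<inter> S t) \<subseteq> Z" "Z \<subseteq> insert f (B0 \<inter> S t) \<union> B0" "card Z = card B0"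
      using aug[OF m f(2) B0E(2) cJ] by blast
    have fZ: "finite Z" using mat_fin[OF m Z(1)] .
    have "\<not> B0 \<subseteq> Z"
    proof
      assume "B0 \<subseteq> Z" hence "insert f B0 \<subseteq> Z" using Z by auto
      hence "card (insert f B0) \<le> card Z" using fZ by (simp add: card_mono)
      thus False using fnB fB0 Z(4) by simp
    qed
    then obtain e where e: "e \<in> B0" "e \<notin> Z" by auto
    have eS: "e \<notin> S t" using e Z(2) by auto
    have Zs: "Z \<subseteq> insert f (B0 - {e})" using Z(3) e by auto
    have "card (insert f (B0 - {e})) = card B0" using fB0 fnB e(1)
      by (simp add: card_Diff_singleton) (metis card_0_eq empty_iff fB0 Suc_pred neq0_conv)
    hence Zeq: "Z = insert f (B0 - {e})" using Zs Z(4) fB0 by (intro card_subset_eq) auto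
    have ufe: "u f < u e" using eS fS e B0E(1) unfolding S_def by auto
    have ZB: "Z \<in> bases" unfolding bases_def using Z(1,4) B0E(3) mat_sub[OF m Z(1)] by simp
    have ge: "card (B0 \<inter> S t') \<le> card (Z \<inter> S t')" for t'
    proof -
      define h where "h x = (if x = e then f else x)" for x
      have "inj_on h (B0 \<inter> S t')" unfolding h_def inj_on_def using fnB e by auto
      moreover have "h ` (B0 \<inter> S t') \<subseteq> Z \<inter> S t'"
      proof
        fix y assume "y \<in> h ` (B0 \<inter> S t')"
        then obtain x where x: "x \<in> B0 \<inter> S t'" "y = h x" by auto
        show "y \<in> Z \<inter> S t'"
        proof (cases "x = e")
          case True
          hence "u e \<le> t'" using x unfolding S_def by auto
          hence "f \<in> S t'" using ufe fS unfolding S_def by auto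
          thus ?thesis using True x Z(2) unfolding h_def by auto
        next
          case False
          thus ?thesis using x Zeq unfolding h_def by auto
        qed
      qed
      ultimately show ?thesis using fZ by (intro card_inj_on_le) auto
    qed
    have "insert f (B0 \<inter> S t) \<subseteq> Z \<inter> S t" using Z(2) fS by auto
    hence "card (insert f (B0 \<inter> S t)) \<le> card (Z \<inter> S t)" using fZ by (simp add: card_mono)
    hence strict: "card (B0 \<inter> S t) < card (Z \<inter> S t)" using fnB fB0 by simp
    have "\<phi> B0 < \<phi> Z" unfolding \<phi>_def
      by (rule sum_strict_mono_ex1) (use fE t ge strict in auto)
    thus False using maxB[OF ZB] by simp
  qed
  hence "\<forall>t\<in>u`E. card (B0 \<inter> {e\<in>E. u e \<le> t}) = rank I {e\<in>E. u e \<le> t}"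
    unfolding S_def by blast
  thus ?thesis using B0E by (intro exI[of _ B0]) simp
qed




lemma bilin_diag:
  assumes "\<forall>e\<in>E. \<forall>f\<in>E. e \<noteq> f \<longrightarrow> L e f = 0" and fin: "finite E"
  shows "bilin E a L b = (\<Sum>e\<in>E. a e * L e e * b e)"
  unfolding bilin_def
proof (rule sum.cong[OF refl])
  fix e assume e: "e \<in> E"
  have "(\<Sum>f\<in>E. a e * L e f * b f) = (\<Sum>f\<in>E. if f = e then a e * L e e * b e else 0)"
    using assms e by (intro sum.cong) auto
  also have "\<dots> = a e * L e e * b e" using e fin by simp
  finally show "(\<Sum>f\<in>E. a e * L e f * b f) = a e * L e e * b e" .
qed

lemma sum_ind:
  assumes "finite S"
  shows "(\<Sum>e\<in>S. if e \<in> B then (1::real) else 0) = real (card (S \<inter> B))"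
  using assms by (simp add: sum.If_cases)

lemma strict_main:
  fixes x y :: "'a \<Rightarrow> real"
  assumes m: "matroid E I" and pos: "\<forall>e\<in>E. L e e > 0"
    and xB: "x \<in> base_polytope E I" and yB: "y \<in> base_polytope E I" and yx: "y \<noteq> x"
    and K: "\<forall>t\<in>(\<lambda>e. x e * L e e)`E. (\<Sum>e\<in>{e\<in>E. x e * L e e \<le> t}. x e) = real (rank I {e\<in>E. x e * L e e \<le> t})"
  shows "\<exists>i<length (sorted_list_of_multiset (image_mset (\<lambda>e. y e * L e e) (mset_set E))).
     take i (sorted_list_of_multiset (image_mset (\<lambda>e. y e * L e e) (mset_set E))) =
     take i (sorted_list_of_multiset (image_mset (\<lambda>e. x e * L e e) (mset_set E))) \<and>
     sorted_list_of_multiset (image_mset (\<lambda>e. y e * L e e) (mset_set E)) ! i <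
     sorted_list_of_multiset (image_mset (\<lambda>e. x e * L e e) (mset_set E)) ! i"
proof -
  define u where "u e = x e * L e e" for e
  define cy where "cy e = y e * L e e" for e
  have fE: "finite E" using m unfolding matroid_def by blast
  define D where "D = {e\<in>E. y e \<noteq> x e}"
  have "D \<noteq> {}"
  proof
    assume "D = {}"
    have "y e = x e" for e
    proof (cases "e \<in> E")
      case True thus ?thesis using \<open>D = {}\<close> unfolding D_def by auto
    next
      case False thus ?thesis using xB yB unfolding base_polytope_def by auto
    qed
    hence "\<forall>e. y e = x e" by auto
    thus False using yx by auto
  qed
  have fD: "finite D" using fE unfolding D_def by auto
  define t where "t = Min (u`D)"
  have "t \<in> u`D" unfolding t_def using fD \<open>D \<noteq> {}\<close> by simp
  then obtain e0 where e0: "e0 \<in> D" "u e0 = t" by auto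
  have tmin: "\<forall>e\<in>D. t \<le> u e" unfolding t_def using fD by simp
  have below: "\<forall>e\<in>E. u e < t \<longrightarrow> y e = x e" using tmin unfolding D_def by force
  define S where "S = {e\<in>E. u e \<le> t}"
  have SE: "S \<subseteq> E" unfolding S_def by auto
  have tE: "t \<in> u`E" using e0 unfolding D_def by auto
  have xS: "(\<Sum>e\<in>S. x e) = real (rank I S)" using K tE unfolding S_def u_def by auto
  have yS: "(\<Sum>e\<in>S. y e) \<le> real (rank I S)" using yB SE unfolding base_polytope_def by blast
  have fS: "finite S" using fE SE finite_subset by auto
  have "\<exists>e1. e1 \<in> S \<and> y e1 < x e1"
  proof (rule ccontr)
    assume "\<nexists>e1. e1 \<in> S \<and> y e1 < x e1"
    hence ge: "\<forall>e\<in>S. x e \<le> y e" by (auto simp: not_less)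
    have "e0 \<in> S" using e0 unfolding S_def D_def by auto
    moreover have "x e0 < y e0" using ge \<open>e0 \<in> S\<close> e0 unfolding D_def by force
    ultimately have "(\<Sum>e\<in>S. x e) < (\<Sum>e\<in>S. y e)"
      by (intro sum_strict_mono_ex1) (use fS ge in auto)
    thus False using xS yS by simp
  qed
  then obtain e1 where e1: "e1 \<in> S" "y e1 < x e1" by blast
  have e1D: "e1 \<in> D" using e1 SE unfolding D_def by auto
  have ue1: "u e1 = t" using tmin e1D e1(1) unfolding S_def by force
  have e1E: "e1 \<in> E" using e1D unfolding D_def by auto
  have cye1: "cy e1 < t" using ue1 e1(2) pos e1E unfolding u_def cy_def by auto
  define G where "G = {e\<in>E. u e \<ge> t}"
  have e1G: "e1 \<in> G" using e1E ue1 unfolding G_def by auto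
  have fG: "finite G" using fE unfolding G_def by auto
  define v where "v = Min (cy`G)"
  have "v \<in> cy`G" unfolding v_def using fG e1G by (intro Min_in) auto
  then obtain e2 where e2: "e2 \<in> G" "cy e2 = v" by auto
  have vmin: "\<forall>e\<in>G. v \<le> cy e" unfolding v_def using fG by simp
  have vt: "v < t" using vmin e1G cye1 by force
  have same: "{e\<in>E. u e = w} = {e\<in>E. cy e = w}" if "w < v" for w
  proof (intro set_eqI iffI)
    fix e assume "e \<in> {e\<in>E. u e = w}"
    hence "e \<in> E" "u e = w" by auto
    hence "y e = x e" using below that vt by auto
    thus "e \<in> {e\<in>E. cy e = w}" using \<open>e \<in> E\<close> \<open>u e = w\<close> unfolding u_def cy_def by simp
  next
    fix e assume "e \<in> {e\<in>E. cy e = w}"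
    hence e: "e \<in> E" "cy e = w" by auto
    have "\<not> u e \<ge> t" using vmin e that unfolding G_def by force
    hence "y e = x e" using below e by auto
    thus "e \<in> {e\<in>E. u e = w}" using e unfolding u_def cy_def by simp
  qed
  have psub: "{e\<in>E. u e = v} \<subset> {e\<in>E. cy e = v}"
  proof
    show "{e\<in>E. u e = v} \<subseteq> {e\<in>E. cy e = v}"
    proof
      fix e assume "e \<in> {e\<in>E. u e = v}"
      hence e: "e \<in> E" "u e = v" by auto
      hence "y e = x e" using below vt by auto
      thus "e \<in> {e\<in>E. cy e = v}" using e unfolding u_def cy_def by simp
    qed
    have "e2 \<in> {e\<in>E. cy e = v}" "e2 \<notin> {e\<in>E. u e = v}" using e2 vt unfolding G_def by auto
    thus "{e\<in>E. u e = v} \<noteq> {e\<in>E. cy e = v}" by blast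
  qed
  have c1: "size (image_mset u (mset_set E)) = size (image_mset cy (mset_set E))" by simp
  have c2: "\<forall>w<v. count (image_mset u (mset_set E)) w = count (image_mset cy (mset_set E)) w"
    using same by (simp add: count_img_mset_set[OF fE])
  have c3: "count (image_mset u (mset_set E)) v < count (image_mset cy (mset_set E)) v"
    using psub fE by (simp add: count_img_mset_set[OF fE] psubset_card_mono)
  from lex_core[OF c1 c2 c3] show ?thesis unfolding u_def cy_def by simp
qed




lemma K_lemma:
  fixes x :: "'a \<Rightarrow> real"
  assumes m: "matroid E I" and diag: "\<forall>e\<in>E. \<forall>f\<in>E. e \<noteq> f \<longrightarrow> L e f = 0"
    and ne: "symmetric_NE E I L x"
  shows "\<forall>t\<in>(\<lambda>e. x e * L e e)`E. (\<Sum>e\<in>{e\<in>E. x e * L e e \<le> t}. x e) = real (rank I {e\<in>E. x e * L e e \<le> t})"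
proof
  fix t assume t: "t \<in> (\<lambda>e. x e * L e e)`E"
  define u where "u e = x e * L e e" for e
  have fE: "finite E" using m unfolding matroid_def by blast
  have xB: "x \<in> base_polytope E I" using ne unfolding symmetric_NE_def by blast
  have const: "(\<Sum>e\<in>E. u e * z e) = (\<Sum>e\<in>E. u e * x e)" if zB: "z \<in> base_polytope E I" for z
  proof -
    have h: "bilin E x L z \<le> bilin E x L x" "bilin E x L x \<le> bilin E z L x"
      using ne zB unfolding symmetric_NE_def by auto
    have b1: "bilin E x L z = (\<Sum>e\<in>E. u e * z e)" unfolding bilin_diag[OF diag fE] u_def by simp
    have b2: "bilin E z L x = (\<Sum>e\<in>E. u e * z e)" unfolding bilin_diag[OF diag fE] u_def
      by (simp add: ac_simps)
    have b3: "bilin E x L x = (\<Sum>e\<in>E. u e * x e)" unfolding bilin_diag[OF diag fE] u_def by simp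
    show ?thesis using h b1 b2 b3 by linarith
  qed
  obtain B0 where B0: "B0 \<subseteq> E" "B0 \<in> I" "card B0 = rank I E"
    "\<forall>t\<in>u`E. card (B0 \<inter> {e\<in>E. u e \<le> t}) = rank I {e\<in>E. u e \<le> t}"
    using chain_basis[OF m, of u] by blast
  define z where "z e = (if e \<in> B0 then 1 else (0::real))" for e
  have zS: "(\<Sum>e\<in>S. z e) = real (card (S \<inter> B0))" if "S \<subseteq> E" for S
    unfolding z_def using sum_ind[of S B0] that fE finite_subset by blast
  have zB: "z \<in> base_polytope E I"
    unfolding base_polytope_def
  proof (intro CollectI conjI allI ballI impI)
    show "\<And>e. e \<in> E \<Longrightarrow> 0 \<le> z e" unfolding z_def by auto
    show "\<And>e. e \<notin> E \<Longrightarrow> z e = 0" unfolding z_def using B0(1) by auto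
    fix S assume S: "S \<subseteq> E"
    have "S \<inter> B0 \<in> I" using mat_down[OF m B0(2)] by blast
    hence "card (S \<inter> B0) \<le> rank I S" using rank_ge[OF m S] by blast
    thus "(\<Sum>e\<in>S. z e) \<le> real (rank I S)" using zS[OF S] by simp
  next
    have "E \<inter> B0 = B0" using B0(1) by auto
    thus "(\<Sum>e\<in>E. z e) = real (rank I E)" using zS[of E] B0(3) by simp
  qed
  define d where "d e = x e - z e" for e
  define St where "St = {e\<in>E. u e \<le> t}"
  have tE: "t \<in> u`E" using t unfolding u_def by simp
  have Ene: "E \<noteq> {}" using t by auto
  have xS: "(\<Sum>e\<in>{e\<in>E. u e \<le> s}. x e) \<le> real (rank I {e\<in>E. u e \<le> s})" for s
    using xB unfolding base_polytope_def by auto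
  have zSt: "(\<Sum>e\<in>{e\<in>E. u e \<le> s}. z e) = real (rank I {e\<in>E. u e \<le> s})" if "s \<in> u`E" for s
  proof -
    have "{e\<in>E. u e \<le> s} \<inter> B0 = B0 \<inter> {e\<in>E. u e \<le> s}" by auto
    thus ?thesis using zS[of "{e\<in>E. u e \<le> s}"] B0(4) that by auto
  qed
  have dS: "(\<Sum>e\<in>{e\<in>E. u e \<le> s}. d e) = (\<Sum>e\<in>{e\<in>E. u e \<le> s}. x e) - (\<Sum>e\<in>{e\<in>E. u e \<le> s}. z e)" for s
    unfolding d_def by (simp add: sum_subtractf)
  have hyp: "\<forall>s\<in>u`E. (\<Sum>e\<in>{e\<in>E. u e \<le> s}. d e) \<le> 0"
    using dS xS zSt by fastforce
  define mx where "mx = Max (u`E)"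
  note ab = abel[OF fE Ene hyp]
  have sd: "(\<Sum>e\<in>E. d e) = 0"
    using xB zB unfolding d_def base_polytope_def by (simp add: sum_subtractf)
  have sud: "(\<Sum>e\<in>E. u e * d e) = 0"
    using const[OF zB] unfolding d_def by (simp add: sum_subtractf right_diff_distrib)
  have "(\<Sum>e\<in>E. (u e - mx) * d e) = (\<Sum>e\<in>E. u e * d e) - mx * (\<Sum>e\<in>E. d e)"
    by (simp add: left_diff_distrib sum_subtractf sum_distrib_left)
  hence z0: "(\<Sum>e\<in>E. (u e - mx) * d e) = 0" using sd sud by simp
  have "t \<le> mx" unfolding mx_def using tE fE by simp
  have "(\<Sum>e\<in>St. d e) = 0"
  proof (cases "t < mx")
    case True thus ?thesis using ab z0 tE unfolding mx_def St_def by blast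
  next
    case False
    have "\<forall>e\<in>E. u e \<le> mx" unfolding mx_def using fE by simp
    hence "St = E" unfolding St_def using False by force
    thus ?thesis using sd by simp
  qed
  hence "(\<Sum>e\<in>St. x e) = real (rank I St)" using dS[of t] zSt[OF tE] unfolding St_def by simp
  thus "(\<Sum>e\<in>{e\<in>E. x e * L e e \<le> t}. x e) = real (rank I {e\<in>E. x e * L e e \<le> t})"
    unfolding St_def u_def .
qed




lemma sr_eq:
  assumes "finite E"
  shows "sorted_ratios E (\<lambda>e. 1 / L e e) y = sorted_list_of_multiset (image_mset (\<lambda>e. y e * L e e) (mset_set E))"
proof -
  have "image_mset (\<lambda>e. y e / (1 / L e e)) (mset_set E) = image_mset (\<lambda>e. y e * L e e) (mset_set E)"
    by (rule image_mset_cong) simp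
  thus ?thesis unfolding sorted_ratios_def by simp
qed

lemma take_nth_eq: "take k xs = take k ys \<Longrightarrow> j < k \<Longrightarrow> xs ! j = ys ! j"
  by (metis nth_take)

theorem corollary14:
  fixes E :: "'a set" and I :: "'a set set" and L :: "'a \<Rightarrow> 'a \<Rightarrow> real"
    and x :: "'a \<Rightarrow> real"
  assumes "matroid E I"
    and "\<forall>e\<in>E. \<forall>f\<in>E. e \<noteq> f \<longrightarrow> L e f = 0"
    and "\<forall>e\<in>E. L e e > 0"
    and "symmetric_NE E I L x"
  shows "lex_optimal E I (\<lambda>e. 1 / L e e) x \<and>
    (\<forall>y. lex_optimal E I (\<lambda>e. 1 / L e e) y \<longrightarrow> y = x)"
proof -
  have fE: "finite E" using assms(1) unfolding matroid_def by blast
  have xB: "x \<in> base_polytope E I" using assms(4) unfolding symmetric_NE_def by blast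
  note K = K_lemma[OF assms(1,2,4)]
  let ?sr = "sorted_ratios E (\<lambda>e. 1 / L e e)"
  have len: "length (?sr y) = length (?sr x)" for y
    unfolding sr_eq[OF fE, of L] by (metis size_mset mset_sorted_list_of_multiset size_image_mset)
  have strict: "\<exists>i<length (?sr y). take i (?sr y) = take i (?sr x) \<and> ?sr y ! i < ?sr x ! i"
    if "y \<in> base_polytope E I" "y \<noteq> x" for y
    unfolding sr_eq[OF fE, of L] using strict_main[of E I L x y, OF assms(1,3) xB that K] .
  have opt: "lex_optimal E I (\<lambda>e. 1 / L e e) x"
    unfolding lex_optimal_def
  proof (intro conjI ballI xB)
    fix y assume yB: "y \<in> base_polytope E I"
    show "lex_le (?sr y) (?sr x)"
    proof (cases "y = x")
      case True thus ?thesis unfolding lex_le_def by simp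
    next
      case False
      then obtain i where "i<length (?sr y)" "take i (?sr y) = take i (?sr x)" "?sr y ! i < ?sr x ! i"
        using strict yB by blast
      thus ?thesis unfolding lex_le_def using len[of y] by auto
    qed
  qed
  moreover have "y = x" if yo: "lex_optimal E I (\<lambda>e. 1 / L e e) y" for y
  proof (rule ccontr)
    assume yx: "y \<noteq> x"
    have yB: "y \<in> base_polytope E I" and le: "lex_le (?sr x) (?sr y)"
      using yo xB unfolding lex_optimal_def by auto
    obtain i where i: "i<length (?sr y)" "take i (?sr y) = take i (?sr x)" "?sr y ! i < ?sr x ! i"
      using strict[OF yB yx] by blast
    show False using le unfolding lex_le_def
    proof (elim disjE exE conjE)
      assume "?sr x = ?sr y" thus False using i(3) by simp
    next
      fix j assume j: "j < min (length (?sr x)) (length (?sr y))" "take j (?sr x) = take j (?sr y)"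
        "?sr x ! j < ?sr y ! j"
      consider "j < i" | "j = i" | "i < j" by linarith
      thus False
      proof cases
        case 1 thus False using take_nth_eq[OF i(2) 1] j(3) by simp
      next
        case 2 thus False using i(3) j(3) by simp
      next
        case 3 thus False using take_nth_eq[OF j(2) 3] i(3) by simp
      qed
    qed
  qed
  ultimately show ?thesis by blast
qed


end
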